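(* Let $S=s_1,\ldots,s_n$ be a sequence of positive real numbers, $\gamma>0$, $k$ a positive integer and $\epsilon>0$. Let $(L^*,\alpha^*,\beta^* )$ be an optimal solution of $\textsc{Exp}$ for $S,\gamma,k$, let $g=(\prod_{i=1}^n s_i)^{1/n}$ and $\psi=n\log g$. Let $(L,\alpha,\beta)$ be the output of $\textit{ApproxExp}(S,\gamma,k,\epsilon)$. Then \[ \mathrm{score}_{\exp}(L,S;\alpha,\beta,\gamma)-\psi\le(1+\epsilon)\big(\mathrm{score}_{\exp}(L^*,S;\alpha^*,\beta^*,\gamma)-\psi\big). \] Moreover, if $g\ge1$, then $\mathrm{score}_{\exp}(L,S;\alpha,\beta,\gamma)\le(1+\epsilon)\,\mathrm{score}_{\exp}(L^*,S;\alpha^*,\beta^*,\gamma)$.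
   Context: A level sequence is $L=\ell_1,\ldots,\ell_n$ of integers with $0\le\ell_i\le k$; set $\ell_0=0$. The penalty is $\mathrm{pen}(x,y)=\max(y-x,0)\,\gamma\log n$; $p_{\exp}(s;\lambda)=\lambda e^{-\lambda s}$; for $\alpha\ge1$, $\beta>0$, $\mathrm{score}_{\exp}(L,S;\alpha,\beta,\gamma)=\sum_{i=1}^n\big[-\log p_{\exp}(s_i;\beta\alpha^{\ell_i})+\mathrm{pen}(\ell_{i-1},\ell_i)\big]$. Problem $\textsc{Exp}$: given $S,\gamma,k$, find $L$ and parameters $\alpha$ (the paper uses $\alpha>1$) and $\beta>0$ minimizing this score. $\textit{Viterbi}(S,\alpha,\beta,\gamma,k,p_{\exp})$ returns a level sequence minimizing the score for fixed $\alpha,\beta$. Algorithm $\textit{ExpAlpha}(S,\alpha,\gamma,k,\epsilon)$: let $\mu=\frac1n\sum_i s_i$ and $\beta=1/\mu$; while $\beta\ge1/(\alpha^k\mu)$: run $\textit{Viterbi}(S,\alpha,\beta,\gamma,k,p_{\exp})$ and set $\beta\leftarrow\beta/(1+\epsilon)$; return the best tested $(L,\beta)$. Algorithm $\textit{ApproxExp}(S,\gamma,k,\epsilon)$: let $\alpha=(\max_i s_i)/(\min_i s_i)$ and $c=(1+\epsilon)^{1/(2k)}$; while $\alpha\ge1$: run $\textit{ExpAlpha}(S,\alpha,\gamma,k,\epsilon/2)$ and set $\alpha\leftarrow\alpha/c$. Return the observed triple $(L,\alpha,\beta)$ with the smallest score. *)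

theory Defs
  imports Complex_Main
begin

text \<open>A sequence S = s_1..s_n is a function nat => real on indices 1..n;
  a level sequence L is a function nat => nat whose values on 1..n lie in 0..k.
  The convention l_0 = 0 is built into the score via prev_level.\<close>

definition level_seq :: "nat \<Rightarrow> nat \<Rightarrow> (nat \<Rightarrow> nat) \<Rightarrow> bool" where
  "level_seq n k L \<longleftrightarrow> (\<forall>i\<in>{1..n}. L i \<le> k)"

definition prev_level :: "(nat \<Rightarrow> nat) \<Rightarrow> nat \<Rightarrow> nat" where
  "prev_level L i = (if i = 1 then 0 else L (i - 1))"

definition pen :: "nat \<Rightarrow> real \<Rightarrow> nat \<Rightarrow> nat \<Rightarrow> real" where
  "pen n \<gamma> x y = max (real y - real x) 0 * \<gamma> * ln (real n)"

definition p_exp :: "real \<Rightarrow> real \<Rightarrow> real" where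
  "p_exp s lam = lam * exp (- lam * s)"

definition score_exp ::
  "nat \<Rightarrow> (nat \<Rightarrow> real) \<Rightarrow> (nat \<Rightarrow> nat) \<Rightarrow> real \<Rightarrow> real \<Rightarrow> real \<Rightarrow> real" where
  "score_exp n S L \<alpha> \<beta> \<gamma> =
     (\<Sum>i=1..n. - ln (p_exp (S i) (\<beta> * \<alpha> ^ L i)) + pen n \<gamma> (prev_level L i) (L i))"

definition exp_optimal ::
  "nat \<Rightarrow> (nat \<Rightarrow> real) \<Rightarrow> real \<Rightarrow> nat \<Rightarrow> (nat \<Rightarrow> nat) \<Rightarrow> real \<Rightarrow> real \<Rightarrow> bool" where
  "exp_optimal n S \<gamma> k L \<alpha> \<beta> \<longleftrightarrow>
     level_seq n k L \<and> \<alpha> > 1 \<and> \<beta> > 0 \<and>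
     (\<forall>L' \<alpha>' \<beta>'. level_seq n k L' \<and> \<alpha>' > 1 \<and> \<beta>' > 0 \<longrightarrow>
        score_exp n S L \<alpha> \<beta> \<gamma> \<le> score_exp n S L' \<alpha>' \<beta>' \<gamma>)"

definition mean_seq :: "nat \<Rightarrow> (nat \<Rightarrow> real) \<Rightarrow> real" where
  "mean_seq n S = (\<Sum>i=1..n. S i) / real n"

text \<open>The pairs (alpha, beta) on which ApproxExp(S,gamma,k,eps) runs Viterbi:
  alpha_j = (max S / min S) / c^j with c = (1+eps)^(1/(2k)), while alpha_j >= 1;
  for each such alpha, ExpAlpha(S,alpha,gamma,k,eps/2) tests
  beta_t = (1/mu) / (1+eps/2)^t while beta_t >= 1/(alpha^k mu).\<close>
definition approx_exp_tested ::
  "nat \<Rightarrow> (nat \<Rightarrow> real) \<Rightarrow> nat \<Rightarrow> real \<Rightarrow> (real \<times> real) set" where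
  "approx_exp_tested n S k \<epsilon> =
     (let A = Max (S ` {1..n}) / Min (S ` {1..n});
          c = (1 + \<epsilon>) powr (1 / (2 * real k));
          \<mu> = mean_seq n S
      in {(A / c ^ j, (1 / \<mu>) / (1 + \<epsilon> / 2) ^ t) | j t.
            A / c ^ j \<ge> 1 \<and>
            (1 / \<mu>) / (1 + \<epsilon> / 2) ^ t \<ge> 1 / ((A / c ^ j) ^ k * \<mu>)})"

text \<open>(L, alpha, beta) is an output of ApproxExp: (alpha, beta) is a tested pair, L is a
  Viterbi output for it (a score minimiser over level sequences), and its score is smallest
  among all observed triples.\<close>
definition approx_exp_output ::
  "nat \<Rightarrow> (nat \<Rightarrow> real) \<Rightarrow> real \<Rightarrow> nat \<Rightarrow> real \<Rightarrow> (nat \<Rightarrow> nat) \<Rightarrow> real \<Rightarrow> real \<Rightarrow> bool" where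
  "approx_exp_output n S \<gamma> k \<epsilon> L \<alpha> \<beta> \<longleftrightarrow>
     (\<alpha>, \<beta>) \<in> approx_exp_tested n S k \<epsilon> \<and> level_seq n k L \<and>
     (\<forall>(\<alpha>', \<beta>') \<in> approx_exp_tested n S k \<epsilon>. \<forall>L'. level_seq n k L' \<longrightarrow>
        score_exp n S L \<alpha> \<beta> \<gamma> \<le> score_exp n S L' \<alpha>' \<beta>' \<gamma>)"

end

theory Submission
  imports Defs
begin


lemma neg_ln_pexp: "lam > 0 \<Longrightarrow> - ln (p_exp s lam) = lam * s - ln lam"
  unfolding p_exp_def by (simp add: ln_mult)

lemma score_split:
  assumes "\<forall>i\<in>{1..n}. S i > 0" "a > 0" "b > 0"
  shows "score_exp n S L a b g = (\<Sum>i=1..n. b * a ^ L i * S i - ln (b * a ^ L i))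
            + (\<Sum>i=1..n. pen n g (prev_level L i) (L i))"
  unfolding score_exp_def sum.distrib[symmetric]
  by (rule sum.cong) (use assms in \<open>auto simp: neg_ln_pexp\<close>)

lemma score_psi:
  assumes "\<forall>i\<in>{1..n}. S i > 0" "a > 0" "b > 0"
  shows "score_exp n S L a b g - (\<Sum>i=1..n. ln (S i)) = (\<Sum>i=1..n. b * a ^ L i * S i - ln (b * a ^ L i * S i))
            + (\<Sum>i=1..n. pen n g (prev_level L i) (L i))"
proof -
  have "(\<Sum>i=1..n. b * a ^ L i * S i - ln (b * a ^ L i * S i)) =
     (\<Sum>i=1..n. b * a ^ L i * S i - ln (b * a ^ L i)) - (\<Sum>i=1..n. ln (S i))"
    unfolding sum_subtractf[symmetric]
  proof (rule sum.cong)
    fix i assume "i \<in> {1..n}"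
    then have "S i > 0" using assms by auto
    then show "b * a ^ L i * S i - ln (b * a ^ L i * S i) = b * a ^ L i * S i - ln (b * a ^ L i) - ln (S i)"
      using assms by (simp add: ln_mult)
  qed simp
  then show ?thesis using score_split[OF assms, of L g] by simp
qed

lemma psi_eq:
  assumes "n \<ge> 1" "\<forall>i\<in>{1..n}. S i > 0"
  shows "real n * ln ((\<Prod>i=1..n. S i) powr (1 / real n)) = (\<Sum>i=1..n. ln (S i))"
proof -
  have "ln (\<Prod>i=1..n. S i) = (\<Sum>i=1..n. ln (S i))"
    by (rule ln_prod) (use assms in force)+
  then show ?thesis using assms(1) by simp
qed

lemma pen_nonneg: "n \<ge> 1 \<Longrightarrow> g > 0 \<Longrightarrow> pen n g x y \<ge> 0"
  unfolding pen_def by simp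

lemma f_ge1: "x > 0 \<Longrightarrow> x - ln x \<ge> (1::real)"
  using ln_le_minus_one[of x] by simp

lemma grid:
  fixes c a b :: real
  assumes "c > 1" "0 < a" "a \<le> b"
  shows "\<exists>j::nat. a \<le> b / c ^ j \<and> b / c ^ j < c * a"
proof -
  obtain m where m: "b / (c * a) < c ^ m" using real_arch_pow[OF assms(1)] by blast
  have ex: "\<exists>j. b < c ^ j * (c * a)" using m assms by (auto simp: field_simps)
  define j where "j = (LEAST j. b < c ^ j * (c * a))"
  have j1: "b < c ^ j * (c * a)" unfolding j_def by (rule LeastI_ex[OF ex])
  have cj: "c ^ j > 0" using assms by simp
  show ?thesis
  proof (cases j)
    case 0
    then show ?thesis using j1 assms by (intro exI[of _ 0]) auto
  next
    case (Suc m)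
    have "\<not> b < c ^ m * (c * a)" using not_less_Least[of m "\<lambda>j. b < c ^ j * (c * a)"] Suc j_def by simp
    then have "a \<le> b / c ^ j" using Suc cj assms by (simp add: field_simps)
    moreover have "b / c ^ j < c * a" using j1 cj by (simp add: field_simps)
    ultimately show ?thesis by blast
  qed
qed



lemma score_uv:
  assumes "\<forall>i\<in>{1..n}. S i > 0" "a > 0" "b > 0"
  shows "score_exp n S L (a * exp u) (b * exp v) g =
     (\<Sum>i=1..n. b * a ^ L i * S i * exp (v + real (L i) * u) - ln (b * a ^ L i) - v - real (L i) * u)
     + (\<Sum>i=1..n. pen n g (prev_level L i) (L i))"
proof -
  have "score_exp n S L (a * exp u) (b * exp v) g =
     (\<Sum>i=1..n. (b * exp v) * (a * exp u) ^ L i * S i - ln ((b * exp v) * (a * exp u) ^ L i))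
     + (\<Sum>i=1..n. pen n g (prev_level L i) (L i))"
    by (rule score_split) (use assms in auto)
  also have "(\<Sum>i=1..n. (b * exp v) * (a * exp u) ^ L i * S i - ln ((b * exp v) * (a * exp u) ^ L i))
     = (\<Sum>i=1..n. b * a ^ L i * S i * exp (v + real (L i) * u) - ln (b * a ^ L i) - v - real (L i) * u)"
  proof (rule sum.cong)
    fix i
    have e: "(a * exp u) ^ L i = a ^ L i * exp (real (L i) * u)"
      by (simp add: power_mult_distrib exp_of_nat_mult)
    have "ln ((b * exp v) * (a * exp u) ^ L i) = ln (b * a ^ L i) + v + real (L i) * u"
      unfolding e using assms by (simp add: ln_mult)
    then show "(b * exp v) * (a * exp u) ^ L i * S i - ln ((b * exp v) * (a * exp u) ^ L i)
        = b * a ^ L i * S i * exp (v + real (L i) * u) - ln (b * a ^ L i) - v - real (L i) * u"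
      unfolding e by (simp add: exp_add algebra_simps)
  qed simp
  finally show ?thesis .
qed

lemma stationary:
  assumes "\<forall>i\<in>{1..n}. S i > 0" "exp_optimal n S g k L a b"
  shows "(\<Sum>i=1..n. b * a ^ L i * S i) = real n"
    and "(\<Sum>i=1..n. real (L i) * (b * a ^ L i * S i - 1)) = 0"
proof -
  have a1: "a > 1" and b0: "b > 0" and lv: "level_seq n k L"
    and opt: "\<And>a' b'. a' > 1 \<Longrightarrow> b' > 0 \<Longrightarrow> score_exp n S L a b g \<le> score_exp n S L a' b' g"
    using assms(2) unfolding exp_optimal_def by auto
  have a0: "a > 0" using a1 by simp
  define x where "x i = b * a ^ L i * S i" for i
  define P where "P = (\<Sum>i=1..n. pen n g (prev_level L i) (L i))"
  define \<phi> where "\<phi> u v = (\<Sum>i=1..n. x i * exp (v + real (L i) * u) - ln (b * a ^ L i) - v - real (L i) * u) + P" for u v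
  have phi: "score_exp n S L (a * exp u) (b * exp v) g = \<phi> u v" for u v
    unfolding \<phi>_def x_def P_def by (rule score_uv[OF assms(1) a0 b0])
  have base: "score_exp n S L a b g = \<phi> 0 0" using phi[of 0 0] by simp
  have dv: "DERIV (\<lambda>v. \<phi> 0 v) 0 :> (\<Sum>i=1..n. x i - 1)"
    unfolding \<phi>_def
    by (auto intro!: derivative_eq_intros)
  have "(\<Sum>i=1..n. x i - 1) = 0"
  proof (rule DERIV_local_min[OF dv, of 1])
    show "\<forall>y. \<bar>0 - y\<bar> < 1 \<longrightarrow> \<phi> 0 0 \<le> \<phi> 0 y"
    proof (intro allI impI)
      fix y :: real
      show "\<phi> 0 0 \<le> \<phi> 0 y" using opt[OF a1, of "b * exp y"] b0 phi[of 0 y] base by simp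
    qed
  qed simp
  then show "(\<Sum>i=1..n. b * a ^ L i * S i) = real n"
    unfolding x_def by (simp add: sum_subtractf)
  have du: "DERIV (\<lambda>u. \<phi> u 0) 0 :> (\<Sum>i=1..n. real (L i) * x i - real (L i))"
    unfolding \<phi>_def
    by (auto intro!: derivative_eq_intros)
  have "(\<Sum>i=1..n. real (L i) * x i - real (L i)) = 0"
  proof (rule DERIV_local_min[OF du, of "ln a"])
    show "0 < ln a" using a1 by simp
    show "\<forall>y. \<bar>0 - y\<bar> < ln a \<longrightarrow> \<phi> 0 0 \<le> \<phi> y 0"
    proof (intro allI impI)
      fix y assume "\<bar>0 - y\<bar> < ln a"
      then have "- ln a < y" by simp
      then have "exp (- ln a) < exp y" by simp
      then have "1 / a < exp y" using a0 by (simp add: exp_minus inverse_eq_divide)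
      then have "1 < a * exp y" using a0 by (simp add: field_simps)
      then show "\<phi> 0 0 \<le> \<phi> y 0" using opt[of "a * exp y" b] b0 phi[of y 0] base by simp
    qed
  qed
  then show "(\<Sum>i=1..n. real (L i) * (b * a ^ L i * S i - 1)) = 0"
    unfolding x_def by (simp add: algebra_simps)
qed



lemma approx_core:
  assumes S: "\<forall>i\<in>{1..n}. S i > 0" and n: "n \<ge> 1" and g: "g > 0" and e: "e > 0"
    and a: "a > 0" and b: "b > 0" and a': "a' > 0" and b': "b' > 0"
    and sx: "(\<Sum>i=1..n. b * a ^ L i * S i) = real n"
    and r: "\<forall>i\<in>{1..n}. b * a ^ L i / (1 + e/2) \<le> b' * a' ^ L i \<and> b' * a' ^ L i \<le> (1 + e/2) * (b * a ^ L i)"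
  shows "score_exp n S L a' b' g - (\<Sum>i=1..n. ln (S i)) \<le> (1 + e) * (score_exp n S L a b g - (\<Sum>i=1..n. ln (S i)))"
proof -
  define x where "x i = b * a ^ L i * S i" for i
  define y where "y i = b' * a' ^ L i * S i" for i
  define P where "P = (\<Sum>i=1..n. pen n g (prev_level L i) (L i))"
  define d where "d = 1 + e/2"
  have d1: "d > 1" using e d_def by simp
  have lnd: "ln d \<le> e/2" unfolding d_def using ln_add_one_self_le_self[of "e/2"] e by simp
  have P0: "P \<ge> 0" unfolding P_def by (rule sum_nonneg) (use pen_nonneg n g in auto)
  have s1: "score_exp n S L a b g - (\<Sum>i=1..n. ln (S i)) = (\<Sum>i=1..n. x i - ln (x i)) + P"
    unfolding x_def P_def by (rule score_psi[OF S a b])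
  have s2: "score_exp n S L a' b' g - (\<Sum>i=1..n. ln (S i)) = (\<Sum>i=1..n. y i - ln (y i)) + P"
    unfolding y_def P_def by (rule score_psi[OF S a' b'])
  have termb: "y i - ln (y i) \<le> (x i - ln (x i)) + e/2 * x i + e/2" if i: "i \<in> {1..n}" for i
  proof -
    have si: "S i > 0" using S i by auto
    have xp: "x i > 0" unfolding x_def using a b si by simp
    have yp: "y i > 0" unfolding y_def using a' b' si by simp
    have r1: "b * a ^ L i / d \<le> b' * a' ^ L i" and r2: "b' * a' ^ L i \<le> d * (b * a ^ L i)"
      using r i unfolding d_def by auto
    have lo: "x i / d \<le> y i"
    proof -
      have "x i / d = (b * a ^ L i / d) * S i" unfolding x_def by simp
      also have "\<dots> \<le> (b' * a' ^ L i) * S i" using r1 si by (intro mult_right_mono) auto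
      finally show ?thesis unfolding y_def .
    qed
    have hi: "y i \<le> d * x i"
    proof -
      have "y i = (b' * a' ^ L i) * S i" unfolding y_def by simp
      also have "\<dots> \<le> (d * (b * a ^ L i)) * S i" using r2 si by (intro mult_right_mono) auto
      finally show ?thesis unfolding x_def by (simp add: mult.assoc)
    qed
    have "x i / d > 0" using xp d1 by simp
    then have "ln (x i / d) \<le> ln (y i)" using lo yp by simp
    then have "ln (x i) - ln d \<le> ln (y i)" using xp d1 by (simp add: ln_div)
    moreover have "y i \<le> x i + e/2 * x i" using hi unfolding d_def by (simp add: algebra_simps)
    ultimately show ?thesis using lnd by linarith
  qed
  have "(\<Sum>i=1..n. y i - ln (y i)) \<le> (\<Sum>i=1..n. (x i - ln (x i)) + e/2 * x i + e/2)"
    by (rule sum_mono) (rule termb)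
  also have "\<dots> = (\<Sum>i=1..n. x i - ln (x i)) + e/2 * (\<Sum>i=1..n. x i) + e/2 * real n"
    by (simp add: sum.distrib sum_distrib_left)
  also have "\<dots> = (\<Sum>i=1..n. x i - ln (x i)) + e * real n"
    using sx unfolding x_def by (simp add: algebra_simps)
  also have "real n \<le> (\<Sum>i=1..n. x i - ln (x i))"
  proof -
    have "(\<Sum>i=1..n. (1::real)) \<le> (\<Sum>i=1..n. x i - ln (x i))"
    proof (rule sum_mono)
      fix i assume "i \<in> {1..n}"
      then have "x i > 0" unfolding x_def using S a b by auto
      then show "1 \<le> x i - ln (x i)" by (rule f_ge1)
    qed
    then show ?thesis by simp
  qed
  then have "(\<Sum>i=1..n. x i - ln (x i)) + e * real n \<le> (1 + e) * (\<Sum>i=1..n. x i - ln (x i))"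
    using e by (simp add: algebra_simps)
  finally have "(\<Sum>i=1..n. y i - ln (y i)) \<le> (1 + e) * (\<Sum>i=1..n. x i - ln (x i))" .
  moreover have "0 \<le> e * P" using P0 e by simp
  then have "P \<le> (1 + e) * P" by (simp add: distrib_right)
  ultimately show ?thesis unfolding s1 s2 by (simp add: distrib_left)
qed



lemma levels_equal:
  fixes x l :: "nat \<Rightarrow> real"
  assumes fin: "finite I" and ne: "I \<noteq> {}"
    and s1: "(\<Sum>i\<in>I. x i - 1) = 0" and s2: "(\<Sum>i\<in>I. l i * (x i - 1)) = 0"
    and mono: "\<forall>i\<in>I. \<forall>j\<in>I. l i > l j \<longrightarrow> x i > x j"
  shows "\<forall>i\<in>I. \<forall>j\<in>I. l i = l j"
proof -
  define J where "J = {i\<in>I. x i \<ge> 1}"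
  have "J \<noteq> {}"
  proof
    assume "J = {}"
    then have "\<forall>i\<in>I. x i - 1 < 0" unfolding J_def by auto
    then have "(\<Sum>i\<in>I. x i - 1) < (\<Sum>i\<in>I. 0)" using fin ne by (intro sum_strict_mono) auto
    then show False using s1 by simp
  qed
  have finJ: "finite J" using fin J_def by simp
  define c where "c = Min (l ` J)"
  have "c \<in> l ` J" unfolding c_def using finJ \<open>J \<noteq> {}\<close> by simp
  then obtain i0 where i0: "i0 \<in> J" "l i0 = c" by auto
  have cmin: "\<And>i. i \<in> J \<Longrightarrow> c \<le> l i" unfolding c_def using finJ by simp
  have below: "x i < 1" if "i \<in> I" "l i < c" for i
  proof (rule ccontr)
    assume "\<not> x i < 1"
    then have "i \<in> J" unfolding J_def using that by simp
    then show False using cmin[of i] that by simp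
  qed
  have above: "x i > 1" if "i \<in> I" "l i > c" for i
  proof -
    have i0I: "i0 \<in> I" and xi0: "x i0 \<ge> 1" using i0(1) unfolding J_def by auto
    have "x i > x i0" using mono that(1) i0I that(2) i0(2) by blast
    then show ?thesis using xi0 by simp
  qed
  have tnn: "\<forall>i\<in>I. (l i - c) * (x i - 1) \<ge> 0"
  proof
    fix i assume i: "i \<in> I"
    consider "l i < c" | "l i = c" | "l i > c" by linarith
    then show "(l i - c) * (x i - 1) \<ge> 0"
    proof cases
      case 1 then show ?thesis using below[OF i] by (intro mult_nonpos_nonpos) auto
    next
      case 2 then show ?thesis by simp
    next
      case 3 then show ?thesis using above[OF i] by (intro mult_nonneg_nonneg) auto
    qed
  qed
  have "(\<Sum>i\<in>I. (l i - c) * (x i - 1)) = (\<Sum>i\<in>I. l i * (x i - 1)) - c * (\<Sum>i\<in>I. x i - 1)"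
  proof -
    have "(\<Sum>i\<in>I. (l i - c) * (x i - 1)) = (\<Sum>i\<in>I. l i * (x i - 1) - c * (x i - 1))"
      by (simp add: left_diff_distrib)
    also have "\<dots> = (\<Sum>i\<in>I. l i * (x i - 1)) - (\<Sum>i\<in>I. c * (x i - 1))"
      by (rule sum_subtractf)
    also have "(\<Sum>i\<in>I. c * (x i - 1)) = c * (\<Sum>i\<in>I. x i - 1)"
      by (rule sum_distrib_left[symmetric])
    finally show ?thesis by simp
  qed
  then have "(\<Sum>i\<in>I. (l i - c) * (x i - 1)) = 0" unfolding s1 s2 by simp
  then have z: "\<forall>i\<in>I. (l i - c) * (x i - 1) = 0" using sum_nonneg_eq_0_iff[OF fin, of "\<lambda>i. (l i - c) * (x i - 1)"] tnn by simp
  have "\<forall>i\<in>I. l i = c"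
  proof
    fix i assume i: "i \<in> I"
    show "l i = c"
    proof (rule ccontr)
      assume "l i \<noteq> c"
      then have "x i = 1" using z i by auto
      then show False using below[OF i] above[OF i] \<open>l i \<noteq> c\<close> by linarith
    qed
  qed
  then show ?thesis by simp
qed



lemma c_facts:
  assumes "k \<ge> 1" "e > 0"
  shows "(1 + e) powr (1 / (2 * real k)) > 1" "((1 + e) powr (1 / (2 * real k))) ^ k \<le> 1 + e/2"
proof -
  have "(1 + e) powr 0 < (1 + e) powr (1 / (2 * real k))"
    by (rule powr_less_mono) (use assms in auto)
  then show "(1 + e) powr (1 / (2 * real k)) > 1" using assms by simp
  have "((1 + e) powr (1 / (2 * real k))) ^ k = ((1 + e) powr (1 / (2 * real k))) powr (real k)"
    by (rule powr_realpow[symmetric]) (use assms in simp)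
  also have "\<dots> = (1 + e) powr (1/2)" using assms by (simp add: powr_powr)
  also have "\<dots> = sqrt (1 + e)" using assms by (simp add: powr_half_sqrt)
  also have "\<dots> \<le> 1 + e/2" by (rule real_le_lsqrt) (use assms in \<open>auto simp: power2_eq_square algebra_simps\<close>)
  finally show "((1 + e) powr (1 / (2 * real k))) ^ k \<le> 1 + e/2" .
qed

lemma tested_mem:
  assumes "A = Max (S ` {1..n}) / Min (S ` {1..n})" "c = (1 + e) powr (1 / (2 * real k))"
    "\<mu> = mean_seq n S" "A / c ^ j \<ge> 1" "(1 / \<mu>) / (1 + e / 2) ^ t \<ge> 1 / ((A / c ^ j) ^ k * \<mu>)"
  shows "(A / c ^ j, (1 / \<mu>) / (1 + e / 2) ^ t) \<in> approx_exp_tested n S k e"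
  using assms unfolding approx_exp_tested_def Let_def by blast



lemma witness:
  assumes S: "\<forall>i\<in>{1..n}. S i > 0" and n: "n \<ge> 1" and k: "k \<ge> 1" and e: "e > 0"
    and opt: "exp_optimal n S g k L a b"
  shows "\<exists>a' b'. (a', b') \<in> approx_exp_tested n S k e \<and> a' > 0 \<and> b' > 0 \<and>
     (\<forall>i\<in>{1..n}. b * a ^ L i / (1 + e/2) \<le> b' * a' ^ L i \<and> b' * a' ^ L i \<le> (1 + e/2) * (b * a ^ L i))"
proof -
  have a1: "a > 1" and b0: "b > 0" and lv: "\<forall>i\<in>{1..n}. L i \<le> k"
    using opt unfolding exp_optimal_def level_seq_def by auto
  have a0: "a > 0" using a1 by simp
  define I where "I = {1..n::nat}"
  have finI: "finite I" and neI: "I \<noteq> {}" and oneI: "1 \<in> I" using n unfolding I_def by auto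
  define Mx where "Mx = Max (S ` I)"
  define Mn where "Mn = Min (S ` I)"
  define A where "A = Mx / Mn"
  define c where "c = (1 + e) powr (1 / (2 * real k))"
  define \<mu> where "\<mu> = mean_seq n S"
  define d where "d = 1 + e/2"
  have d1: "d > 1" using e unfolding d_def by simp
  have c1: "c > 1" and ck: "c ^ k \<le> d" using c_facts[OF k e] unfolding c_def d_def by auto
  have Sp: "\<And>i. i \<in> I \<Longrightarrow> S i > 0" using S unfolding I_def by auto
  have Mn0: "Mn > 0" unfolding Mn_def using Min_in[of "S ` I"] finI neI Sp by auto
  have MnS: "\<And>i. i \<in> I \<Longrightarrow> Mn \<le> S i" unfolding Mn_def using finI by simp
  have MxS: "\<And>i. i \<in> I \<Longrightarrow> S i \<le> Mx" unfolding Mx_def using finI by simp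
  have A1: "A \<ge> 1" unfolding A_def using MnS[OF oneI] MxS[OF oneI] Mn0 by simp
  have A0: "A > 0" using A1 by simp
  have AS: "\<And>i j. i \<in> I \<Longrightarrow> j \<in> I \<Longrightarrow> S j \<le> A * S i"
  proof -
    fix i j assume i: "i \<in> I" and j: "j \<in> I"
    have "A * S i \<ge> A * Mn" using MnS[OF i] A0 by simp
    also have "A * Mn = Mx" unfolding A_def using Mn0 by simp
    finally show "S j \<le> A * S i" using MxS[OF j] by simp
  qed
  have sumS: "(\<Sum>i\<in>I. S i) = real n * \<mu>" unfolding \<mu>_def mean_seq_def I_def using n by simp
  have "(\<Sum>i\<in>I. S i) > 0" using finI neI Sp by (intro sum_pos) auto
  then have \<mu>0: "\<mu> > 0" using sumS n by (simp add: zero_less_mult_iff)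
  define x where "x i = b * a ^ L i * S i" for i
  have sx: "(\<Sum>i\<in>I. x i) = real n" unfolding x_def I_def by (rule stationary(1)[OF S opt])
  have sl: "(\<Sum>i\<in>I. real (L i) * (x i - 1)) = 0" unfolding x_def I_def by (rule stationary(2)[OF S opt])
  have "(\<Sum>i\<in>I. b * S i) \<le> (\<Sum>i\<in>I. x i)"
  proof (rule sum_mono)
    fix i assume "i \<in> I"
    have "1 \<le> a ^ L i" using a1 by simp
    then have "b * S i * 1 \<le> b * S i * a ^ L i" using b0 Sp[OF \<open>i \<in> I\<close>] by (intro mult_left_mono) auto
    then show "b * S i \<le> x i" unfolding x_def by (simp add: ac_simps)
  qed
  then have "b * (real n * \<mu>) \<le> real n" using sx sumS by (simp add: sum_distrib_left[symmetric])
  then have bmu: "b * \<mu> \<le> 1" using n by (simp add: algebra_simps)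
  have "(\<Sum>i\<in>I. x i) \<le> (\<Sum>i\<in>I. b * a ^ k * S i)"
  proof (rule sum_mono)
    fix i assume i: "i \<in> I"
    have "a ^ L i \<le> a ^ k" using a1 lv i unfolding I_def by (intro power_increasing) auto
    then have "b * S i * a ^ L i \<le> b * S i * a ^ k" using b0 Sp[OF i] by (intro mult_left_mono) auto
    then show "x i \<le> b * a ^ k * S i" unfolding x_def by (simp add: ac_simps)
  qed
  then have "real n \<le> b * a ^ k * (real n * \<mu>)" using sx sumS by (simp add: sum_distrib_left[symmetric])
  then have bakmu: "1 \<le> b * a ^ k * \<mu>" using n by (simp add: algebra_simps)
  have tm: "\<And>j t. A / c ^ j \<ge> 1 \<Longrightarrow> (1 / \<mu>) / d ^ t \<ge> 1 / ((A / c ^ j) ^ k * \<mu>) \<Longrightarrow>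
      (A / c ^ j, (1 / \<mu>) / d ^ t) \<in> approx_exp_tested n S k e"
    unfolding d_def by (rule tested_mem) (auto simp: A_def Mx_def Mn_def I_def c_def \<mu>_def)
  show ?thesis
  proof (cases "a \<le> A")
    case True
    obtain j where j: "a \<le> A / c ^ j" "A / c ^ j < c * a" using grid[OF c1 a0 True] by blast
    define a' where "a' = A / c ^ j"
    have a'1: "a' > 1" using j a1 unfolding a'_def by simp
    have "b / d \<le> 1 / \<mu>" using bmu d1 b0 \<mu>0 by (simp add: field_simps)
    then obtain t where t: "b / d \<le> (1 / \<mu>) / d ^ t" "(1 / \<mu>) / d ^ t < d * (b / d)"
      using grid[OF d1, of "b / d" "1 / \<mu>"] b0 d1 by auto
    define b1 where "b1 = (1 / \<mu>) / d ^ t"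
    have b1lo: "b / d \<le> b1" and b1hi: "b1 < b" using t d1 unfolding b1_def by auto
    have b1p: "b1 > 0" using b1lo b0 d1 by (smt (verit) divide_pos_pos)
    show ?thesis
    proof (cases "b1 \<ge> 1 / (a' ^ k * \<mu>)")
      case True
      show ?thesis
      proof (intro exI conjI ballI)
        show "(a', b1) \<in> approx_exp_tested n S k e"
          unfolding a'_def b1_def by (rule tm) (use a'1 True in \<open>auto simp: a'_def b1_def\<close>)
        show "a' > 0" "b1 > 0" using a'1 b1p by auto
        fix i assume i: "i \<in> {1..n}"
        have aa: "a ^ L i \<le> a' ^ L i" using j a0 unfolding a'_def by (intro power_mono) auto
        have "b * a ^ L i / d = (b / d) * a ^ L i" by simp
        also have "\<dots> \<le> b1 * a' ^ L i" using b1lo aa b0 d1 a0 b1p by (intro mult_mono) auto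
        finally show "b * a ^ L i / (1 + e/2) \<le> b1 * a' ^ L i" unfolding d_def .
        have "a' ^ L i \<le> (c * a) ^ L i" using j a'1 unfolding a'_def by (intro power_mono) auto
        also have "\<dots> = c ^ L i * a ^ L i" by (simp add: power_mult_distrib)
        also have "\<dots> \<le> c ^ k * a ^ L i" using c1 lv i a0 by (intro mult_right_mono power_increasing) auto
        also have "\<dots> \<le> d * a ^ L i" using ck a0 by (intro mult_right_mono) auto
        finally have "a' ^ L i \<le> d * a ^ L i" .
        then have "b1 * a' ^ L i \<le> b * (d * a ^ L i)" using b1hi b1p a'1 by (intro mult_mono) auto
        then show "b1 * a' ^ L i \<le> (1 + e/2) * (b * a ^ L i)" unfolding d_def by (simp add: ac_simps)
      qed
    next
      case False
      have "t \<noteq> 0"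
      proof
        assume "t = 0"
        then have "b1 = 1 / \<mu>" unfolding b1_def by simp
        moreover have "\<mu> * b1 < \<mu> * b" using b1hi \<mu>0 by simp
        ultimately show False using bmu \<mu>0 by (simp add: field_simps)
      qed
      then obtain t' where t': "t = Suc t'" by (cases t) auto
      define b2 where "b2 = (1 / \<mu>) / d ^ t'"
      have b2eq: "b2 = d * b1" unfolding b2_def b1_def t' using d1 by (simp add: field_simps)
      have b2lo: "b \<le> b2" using b1lo d1 b2eq by (simp add: field_simps)
      have b2p: "b2 > 0" using b2lo b0 by simp
      have ra: "a \<le> a'" using j unfolding a'_def by simp
      have b1ak: "b1 * a' ^ k * \<mu> < 1" using False a'1 \<mu>0 by (simp add: field_simps)
      show ?thesis
      proof (intro exI conjI ballI)
        have "1 / (a' ^ k * \<mu>) \<le> 1 / (a ^ k * \<mu>)"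
          using ra a1 \<mu>0 by (intro divide_left_mono mult_right_mono power_mono mult_pos_pos) auto
        also have "\<dots> \<le> b" using bakmu a1 \<mu>0 by (simp add: field_simps)
        finally have "1 / (a' ^ k * \<mu>) \<le> b2" using b2lo by simp
        then show "(a', b2) \<in> approx_exp_tested n S k e"
          unfolding a'_def b2_def by (rule tm[rotated]) (use a'1 in \<open>auto simp: a'_def b1_def\<close>)
        show "a' > 0" "b2 > 0" using a'1 b2p by auto
        fix i assume i: "i \<in> {1..n}"
        have aa: "a ^ L i \<le> a' ^ L i" using ra a0 by (intro power_mono) auto
        have "b * a ^ L i / d \<le> b * a ^ L i" using b0 a0 d1 by (simp add: field_simps)
        also have "\<dots> \<le> b2 * a' ^ L i" using b2lo aa b0 a0 by (intro mult_mono) auto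
        finally show "b * a ^ L i / (1 + e/2) \<le> b2 * a' ^ L i" unfolding d_def .
        define \<rho> where "\<rho> = a' / a"
        have \<rho>1: "\<rho> \<ge> 1" using ra a0 unfolding \<rho>_def by simp
        have a'eq: "a' = \<rho> * a" unfolding \<rho>_def using a0 by simp
        have k1: "b2 * a' ^ L i \<le> b2 * \<rho> ^ k * a ^ L i"
        proof -
          have "b2 * a' ^ L i = b2 * \<rho> ^ L i * a ^ L i" unfolding a'eq by (simp add: power_mult_distrib)
          also have "\<dots> \<le> b2 * \<rho> ^ k * a ^ L i"
            using \<rho>1 lv i b2p a0 by (intro mult_right_mono mult_left_mono power_increasing) auto
          finally show ?thesis .
        qed
        have rk: "\<rho> ^ k = a' ^ k / a ^ k" unfolding \<rho>_def by (simp add: power_divide)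
        have "b1 * a' ^ k < 1 / \<mu>" using b1ak \<mu>0 by (simp add: field_simps)
        then have k3: "d * (b1 * a' ^ k) \<le> d * (1 / \<mu>)" using d1 by (intro mult_left_mono) auto
        have k4: "1 / \<mu> \<le> b * a ^ k" using bakmu \<mu>0 by (simp add: field_simps)
        have apos: "a ^ k > 0" using a0 by simp
        have "b2 * \<rho> ^ k = d * (b1 * a' ^ k) / a ^ k" unfolding b2eq rk by simp
        also have "\<dots> \<le> d * (b * a ^ k) / a ^ k"
        proof -
          have "b1 * a' ^ k \<le> b * a ^ k" using \<open>b1 * a' ^ k < 1 / \<mu>\<close> k4 by linarith
          then have "d * (b1 * a' ^ k) \<le> d * (b * a ^ k)" using d1 by (intro mult_left_mono) auto
          then show ?thesis using apos by (intro divide_right_mono) auto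
        qed
        also have "\<dots> = d * b" using apos a0 by simp
        finally have "b2 * \<rho> ^ k \<le> d * b" .
        then have "b2 * \<rho> ^ k * a ^ L i \<le> d * b * a ^ L i" using a0 by (intro mult_right_mono) auto
        then have "b2 * a' ^ L i \<le> d * b * a ^ L i" using k1 by linarith
        then show "b2 * a' ^ L i \<le> (1 + e/2) * (b * a ^ L i)" unfolding d_def by (simp add: ac_simps)
      qed
    qed
  next
    case False
    then have aA: "a > A" by simp
    have s1: "(\<Sum>i\<in>I. x i - 1) = 0" using sx by (simp add: sum_subtractf I_def)
    have mono: "\<forall>i\<in>I. \<forall>j\<in>I. real (L i) > real (L j) \<longrightarrow> x i > x j"
    proof (intro ballI impI)
      fix i j assume i: "i \<in> I" and j: "j \<in> I" and lt: "real (L i) > real (L j)"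
      then have "L i \<ge> Suc (L j)" by simp
      then have "a ^ L i \<ge> a ^ Suc (L j)" using a1 by (intro power_increasing) auto
      then have "a ^ L i \<ge> a * a ^ L j" by simp
      moreover have "a * a ^ L j > A * a ^ L j" using aA a0 by simp
      ultimately have "a ^ L i > A * a ^ L j" by linarith
      then have "a ^ L i * S i > A * a ^ L j * S i" using Sp[OF i] by simp
      moreover have "A * a ^ L j * S i \<ge> a ^ L j * S j" using AS[OF i j] a0
        by (metis mult.assoc mult.left_commute mult_left_mono zero_le_power less_imp_le)
      ultimately have "a ^ L i * S i > a ^ L j * S j" by linarith
      then show "x i > x j" unfolding x_def using b0 by (simp add: mult.assoc)
    qed
    have eqL: "\<forall>i\<in>I. \<forall>j\<in>I. real (L i) = real (L j)"
      by (rule levels_equal[OF finI neI s1 sl mono])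
    define c0 where "c0 = L 1"
    have Lc0: "L i = c0" if i: "i \<in> I" for i
    proof -
      have "real (L i) = real (L 1)" using bspec[OF bspec[OF eqL i] oneI] .
      then show ?thesis unfolding c0_def by simp
    qed
    have c0k: "c0 \<le> k" using lv oneI unfolding c0_def I_def by auto
    have "(\<Sum>i\<in>I. x i) = (\<Sum>i\<in>I. b * a ^ c0 * S i)" unfolding x_def by (rule sum.cong) (simp_all add: Lc0)
    also have "\<dots> = b * a ^ c0 * (real n * \<mu>)" using sumS by (simp add: sum_distrib_left[symmetric])
    finally have bac0: "b * a ^ c0 * \<mu> = 1" using sx n by (simp add: algebra_simps)
    have Ac0: "A ^ c0 \<ge> 1" using A1 by simp
    have "1 / (A ^ c0 * \<mu>) \<le> 1 / \<mu>" using Ac0 \<mu>0 by (simp add: field_simps)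
    then obtain t where t: "1 / (A ^ c0 * \<mu>) \<le> (1 / \<mu>) / d ^ t" "(1 / \<mu>) / d ^ t < d * (1 / (A ^ c0 * \<mu>))"
      using grid[OF d1, of "1 / (A ^ c0 * \<mu>)" "1 / \<mu>"] Ac0 \<mu>0 by auto
    define b' where "b' = (1 / \<mu>) / d ^ t"
    have b'p: "b' > 0" using \<mu>0 d1 unfolding b'_def by simp
    have Akc0: "A ^ c0 \<le> A ^ k" using A1 c0k by (intro power_increasing) auto
    show ?thesis
    proof (intro exI conjI ballI)
      have "1 / (A ^ k * \<mu>) \<le> 1 / (A ^ c0 * \<mu>)"
        using Akc0 Ac0 \<mu>0 by (intro divide_left_mono mult_right_mono mult_pos_pos) auto
      then have "1 / ((A / c ^ 0) ^ k * \<mu>) \<le> b'" using t(1) unfolding b'_def by simp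
      then have "(A / c ^ 0, b') \<in> approx_exp_tested n S k e"
        unfolding b'_def by (rule tm[rotated]) (use A1 in simp)
      then show "(A, b') \<in> approx_exp_tested n S k e" by simp
      show "A > 0" "b' > 0" using A0 b'p by auto
      fix i assume i: "i \<in> {1..n}"
      then have Li: "L i = c0" using Lc0 unfolding I_def by simp
      have lo: "1 / \<mu> \<le> b' * A ^ c0" using t(1) Ac0 \<mu>0 unfolding b'_def by (simp add: field_simps)
      have hi: "b' * A ^ c0 < d / \<mu>" using t(2) Ac0 \<mu>0 unfolding b'_def by (simp add: field_simps)
      have bmu': "b * a ^ c0 = 1 / \<mu>" using bac0 \<mu>0 by (simp add: field_simps)
      show "b * a ^ L i / (1 + e/2) \<le> b' * A ^ L i"
      proof -
        have "1 / \<mu> / d \<le> 1 / \<mu>" using d1 \<mu>0 by (simp add: field_simps)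
        then show ?thesis unfolding Li bmu' d_def[symmetric] using lo by linarith
      qed
      show "b' * A ^ L i \<le> (1 + e/2) * (b * a ^ L i)"
        unfolding Li bmu' using hi unfolding d_def[symmetric] by simp
    qed
  qed
qed


theorem proposition8:
  fixes n k :: nat and S :: "nat \<Rightarrow> real" and \<gamma> \<epsilon> :: real
    and Lopt L :: "nat \<Rightarrow> nat" and \<alpha>opt \<beta>opt \<alpha> \<beta> :: real
  assumes "n \<ge> 1"
    and "\<forall>i\<in>{1..n}. S i > 0"
    and "\<gamma> > 0" and "k \<ge> 1" and "\<epsilon> > 0"
    and "exp_optimal n S \<gamma> k Lopt \<alpha>opt \<beta>opt"
    and "approx_exp_output n S \<gamma> k \<epsilon> L \<alpha> \<beta>"
  shows "score_exp n S L \<alpha> \<beta> \<gamma> - real n * ln ((\<Prod>i=1..n. S i) powr (1 / real n))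
           \<le> (1 + \<epsilon>) * (score_exp n S Lopt \<alpha>opt \<beta>opt \<gamma>
                           - real n * ln ((\<Prod>i=1..n. S i) powr (1 / real n)))
         \<and> ((\<Prod>i=1..n. S i) powr (1 / real n) \<ge> 1 \<longrightarrow>
           score_exp n S L \<alpha> \<beta> \<gamma> \<le> (1 + \<epsilon>) * score_exp n S Lopt \<alpha>opt \<beta>opt \<gamma>)"
proof -
  note n = assms(1) and S = assms(2) and g = assms(3) and k = assms(4) and e = assms(5)
    and opt = assms(6) and out = assms(7)
  have a1: "\<alpha>opt > 1" and b0: "\<beta>opt > 0" and lvo: "level_seq n k Lopt"
    using opt unfolding exp_optimal_def by auto
  obtain a' b' where ab: "(a', b') \<in> approx_exp_tested n S k \<epsilon>" and a'0: "a' > 0" and b'0: "b' > 0"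
    and r: "\<forall>i\<in>{1..n}. \<beta>opt * \<alpha>opt ^ Lopt i / (1 + \<epsilon>/2) \<le> b' * a' ^ Lopt i \<and>
                b' * a' ^ Lopt i \<le> (1 + \<epsilon>/2) * (\<beta>opt * \<alpha>opt ^ Lopt i)"
    using witness[OF S n k e opt] by blast
  have sc1: "score_exp n S L \<alpha> \<beta> \<gamma> \<le> score_exp n S Lopt a' b' \<gamma>"
    using out ab lvo unfolding approx_exp_output_def by blast
  have core: "score_exp n S Lopt a' b' \<gamma> - (\<Sum>i=1..n. ln (S i))
      \<le> (1 + \<epsilon>) * (score_exp n S Lopt \<alpha>opt \<beta>opt \<gamma> - (\<Sum>i=1..n. ln (S i)))"
    by (rule approx_core[OF S n g e _ b0 a'0 b'0 stationary(1)[OF S opt] r]) (use a1 in simp)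
  define \<psi> where "\<psi> = real n * ln ((\<Prod>i=1..n. S i) powr (1 / real n))"
  have psi: "\<psi> = (\<Sum>i=1..n. ln (S i))" unfolding \<psi>_def by (rule psi_eq[OF n S])
  have P1: "score_exp n S L \<alpha> \<beta> \<gamma> - \<psi> \<le> (1 + \<epsilon>) * (score_exp n S Lopt \<alpha>opt \<beta>opt \<gamma> - \<psi>)"
    using sc1 core unfolding psi by linarith
  moreover have "score_exp n S L \<alpha> \<beta> \<gamma> \<le> (1 + \<epsilon>) * score_exp n S Lopt \<alpha>opt \<beta>opt \<gamma>"
    if G: "(\<Prod>i=1..n. S i) powr (1 / real n) \<ge> 1"
  proof -
    have "ln ((\<Prod>i=1..n. S i) powr (1 / real n)) \<ge> 0" by (rule ln_ge_zero[OF G])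
    then have p0: "\<psi> \<ge> 0" unfolding \<psi>_def by (rule mult_nonneg_nonneg[OF of_nat_0_le_iff])
    then have "\<epsilon> * \<psi> \<ge> 0" using e by simp
    then show ?thesis using P1 by (simp add: algebra_simps)
  qed
  ultimately show ?thesis unfolding \<psi>_def by blast
qed

end
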